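(* Let $G$ be a locally compact Abelian group. If $\nu$ is a finite measure on $G$ and $\mu$ is a norm almost periodic measure on $G$, then $\mu*\nu$ is norm almost periodic.
   Context: A finite measure has finite total variation. $\|\mu\|_K=\sup_t|\mu|(t+K)$; $T_t\mu$ is the translate of $\mu$ by $t$. A measure $\mu$ is norm almost periodic if for each $\epsilon>0$ the set $\{t:\|T_t\mu-\mu\|_K<\epsilon\}$ is relatively dense (i.e. $P+C=G$ for some compact $C$), for a fixed compact $K$ with non-empty interior; the notion is independent of $K$. *)

theory Defs
  imports "HOL-Analysis.Analysis"
begin

text \<open>Complex Radon measures on a locally compact Hausdorff space are represented
  in polar form  mu = h . M , where M = |mu| is a positive Radon measure on the
  Borel sets (locally finite, inner regular on open sets, outer regular) and
  h is a Borel function with  |h| = 1.  The measure, as a complex set function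
  on (relatively compact) Borel sets, is  A |-> integral over A of h dM.\<close>

definition radon_measure :: "'a::topological_space measure \<Rightarrow> bool" where
  "radon_measure M \<longleftrightarrow>
     sets M = sets borel \<and>
     (\<forall>K. compact K \<longrightarrow> emeasure M K < \<infinity>) \<and>
     (\<forall>U. open U \<longrightarrow> emeasure M U = (SUP K\<in>{K. compact K \<and> K \<subseteq> U}. emeasure M K)) \<and>
     (\<forall>B\<in>sets borel. emeasure M B = (INF U\<in>{U. open U \<and> B \<subseteq> U}. emeasure M U))"

definition complex_radon :: "'a::topological_space measure \<Rightarrow> ('a \<Rightarrow> complex) \<Rightarrow> bool" where
  "complex_radon M h \<longleftrightarrow> radon_measure M \<and> h \<in> borel_measurable M \<and> (\<forall>x. cmod (h x) = 1)"

definition finite_complex_radon :: "'a::topological_space measure \<Rightarrow> ('a \<Rightarrow> complex) \<Rightarrow> bool" where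
  "finite_complex_radon M h \<longleftrightarrow> complex_radon M h \<and> emeasure M (space M) < \<infinity>"

definition cmeas :: "'a measure \<Rightarrow> ('a \<Rightarrow> complex) \<Rightarrow> 'a set \<Rightarrow> complex" where
  "cmeas M h A = (LINT x:A|M. h x)"

definition conv_meas :: "'a::plus measure \<Rightarrow> ('a \<Rightarrow> complex) \<Rightarrow> 'a measure \<Rightarrow> ('a \<Rightarrow> complex)
    \<Rightarrow> 'a set \<Rightarrow> complex" where
  "conv_meas M h N g A = (\<integral>y. (\<integral>x. indicator A (x + y) * h x \<partial>M) * g y \<partial>N)"

definition tvar :: "('a::topological_space set \<Rightarrow> complex) \<Rightarrow> 'a set \<Rightarrow> ennreal" where
  "tvar \<mu> A = (SUP P\<in>{P. finite P \<and> disjoint P \<and> (\<forall>B\<in>P. B \<in> sets borel \<and> B \<subseteq> A)}.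
                  \<Sum>B\<in>P. ennreal (cmod (\<mu> B)))"

definition Knorm :: "'a::{topological_space,plus} set \<Rightarrow> ('a set \<Rightarrow> complex) \<Rightarrow> ennreal" where
  "Knorm K \<mu> = (SUP t. tvar \<mu> ((+) t ` K))"

definition translate :: "'a::group_add \<Rightarrow> ('a set \<Rightarrow> complex) \<Rightarrow> 'a set \<Rightarrow> complex" where
  "translate t \<mu> A = \<mu> ((+) (- t) ` A)"

definition relatively_dense :: "'a::{topological_space,plus} set \<Rightarrow> bool" where
  "relatively_dense P \<longleftrightarrow> (\<exists>C. compact C \<and> {p + c | p c. p \<in> P \<and> c \<in> C} = UNIV)"

definition norm_almost_periodic ::
    "'a::{topological_space,group_add} set \<Rightarrow> ('a set \<Rightarrow> complex) \<Rightarrow> bool" where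
  "norm_almost_periodic K \<mu> \<longleftrightarrow>
     (\<forall>\<epsilon>>0. relatively_dense {t. Knorm K (\<lambda>A. translate t \<mu> A - \<mu> A) < ennreal \<epsilon>})"

end

theory Submission
  imports Defs
begin

lemma borel_translate:
  fixes B :: "'a::topological_ab_group_add set"
  assumes "B \<in> sets borel"
  shows "(+) a ` B \<in> sets borel"
proof -
  have eq: "(+) a ` B = (\<lambda>x. -a + x) -` B"
  proof (intro set_eqI iffI)
    fix x assume "x \<in> (+) a ` B" then show "x \<in> (\<lambda>x. -a + x) -` B" by auto
  next
    fix x assume "x \<in> (\<lambda>x. -a + x) -` B" 
    then have "-a + x \<in> B" by simp
    moreover have "x = a + (-a + x)" by simp
    ultimately show "x \<in> (+) a ` B" by (metis image_eqI)
  qed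
  have "(\<lambda>x. -a + x) \<in> borel_measurable borel"
    by (intro borel_measurable_continuous_onI continuous_intros)
  then show ?thesis unfolding eq using assms by (rule measurable_sets_borel)
qed

lemma compact_translate:
  fixes K :: "'a::topological_ab_group_add set"
  shows "compact K \<Longrightarrow> compact ((+) a ` K)"
  by (intro compact_continuous_image continuous_intros)

lemma translate_translate:
  fixes A :: "'a::ab_group_add set"
  shows "(+) a ` ((+) b ` A) = (+) (a + b) ` A"
  by (simp add: image_image add.assoc)

lemma tvar_le:
  assumes "finite P" "disjoint P" "\<forall>B\<in>P. B \<in> sets borel \<and> B \<subseteq> A"
  shows "(\<Sum>B\<in>P. ennreal (cmod (\<mu> B))) \<le> tvar \<mu> A"
  unfolding tvar_def by (rule SUP_upper) (use assms in auto)

lemma tvar_leI: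
  assumes "\<And>P. finite P \<Longrightarrow> disjoint P \<Longrightarrow> (\<forall>B\<in>P. B \<in> sets borel \<and> B \<subseteq> A) \<Longrightarrow>
     (\<Sum>B\<in>P. ennreal (cmod (\<mu> B))) \<le> r"
  shows "tvar \<mu> A \<le> r"
  unfolding tvar_def by (rule SUP_least) (use assms in auto)

lemma tvar_single:
  assumes "B \<in> sets borel" "B \<subseteq> A"
  shows "ennreal (cmod (\<mu> B)) \<le> tvar \<mu> A"
  using tvar_le[of "{B}" A \<mu>] assms by auto

lemma tvar_mono:
  assumes "A \<subseteq> A'"
  shows "tvar \<mu> A \<le> tvar \<mu> A'"
  by (rule tvar_leI, rule tvar_le) (use assms in auto)

lemma tvar_sub:
  assumes "\<And>B. cmod (\<mu> B) \<le> cmod (\<mu>1 B) + cmod (\<mu>2 B)"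
  shows "tvar \<mu> A \<le> tvar \<mu>1 A + tvar \<mu>2 A"
proof (rule tvar_leI)
  fix P assume P: "finite P" "disjoint P" "\<forall>B\<in>P. B \<in> sets borel \<and> B \<subseteq> A"
  have "(\<Sum>B\<in>P. ennreal (cmod (\<mu> B))) \<le> (\<Sum>B\<in>P. ennreal (cmod (\<mu>1 B)) + ennreal (cmod (\<mu>2 B)))"
    by (intro sum_mono) (metis assms ennreal_leI ennreal_plus norm_ge_zero)
  also have "\<dots> = (\<Sum>B\<in>P. ennreal (cmod (\<mu>1 B))) + (\<Sum>B\<in>P. ennreal (cmod (\<mu>2 B)))"
    by (rule sum.distrib)
  also have "\<dots> \<le> tvar \<mu>1 A + tvar \<mu>2 A"
    by (intro add_mono tvar_le P)
  finally show "(\<Sum>B\<in>P. ennreal (cmod (\<mu> B))) \<le> tvar \<mu>1 A + tvar \<mu>2 A" .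
qed

lemma tvar_translate_le:
  fixes A :: "'a::{topological_ab_group_add} set"
  shows "tvar (\<lambda>B. \<mu> ((+) a ` B)) A \<le> tvar \<mu> ((+) a ` A)"
proof (rule tvar_leI)
  fix P assume P: "finite P" "disjoint P" "\<forall>B\<in>P. B \<in> sets borel \<and> B \<subseteq> A"
  have inj: "inj_on ((`) ((+) a)) P"
    by (intro inj_onI) (simp add: inj_image_eq_iff)
  have "(\<Sum>B\<in>P. ennreal (cmod (\<mu> ((+) a ` B)))) = (\<Sum>C\<in>(`) ((+) a) ` P. ennreal (cmod (\<mu> C)))"
    by (simp add: sum.reindex[OF inj])
  also have "\<dots> \<le> tvar \<mu> ((+) a ` A)"
  proof (rule tvar_le)
    show "finite ((`) ((+) a) ` P)" using P by simp
    show "disjoint ((`) ((+) a) ` P)"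
    proof (rule pairwiseI)
      fix X Y assume XY: "X \<in> (`) ((+) a) ` P" "Y \<in> (`) ((+) a) ` P" "X \<noteq> Y"
      then obtain X' Y' where X': "X' \<in> P" "X = (+) a ` X'" and Y': "Y' \<in> P" "Y = (+) a ` Y'"
        by blast
      then have "X' \<noteq> Y'" using XY by blast
      then have "disjnt X' Y'" using P(2) X' Y' unfolding disjoint_def disjnt_def by (simp add: pairwise_def)
      then show "disjnt X Y" using X' Y'
        by (simp add: disjnt_def image_Int[symmetric])
    qed
    show "\<forall>B\<in>(`) ((+) a) ` P. B \<in> sets borel \<and> B \<subseteq> (+) a ` A"
      using P(3) by (auto intro: borel_translate)
  qed
  finally show "(\<Sum>B\<in>P. ennreal (cmod (\<mu> ((+) a ` B)))) \<le> tvar \<mu> ((+) a ` A)" .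
qed


lemma ennreal_measure_le_emeasure: "ennreal (measure M B) \<le> emeasure M B"
proof (cases "emeasure M B = \<infinity>")
  case True then show ?thesis by simp
next
  case False then show ?thesis using emeasure_eq_ennreal_measure[of M B] by simp
qed

lemma cmeas_norm_le:
  assumes h: "\<And>x. cmod (h x) = 1" and sM: "sets M = sets borel"
  shows "cmod (cmeas M h B) \<le> measure M B"
proof -
  have sp: "space M = UNIV" using sets_eq_imp_space_eq[OF sM] by simp
  have "cmod (cmeas M h B) \<le> (\<integral>x. norm (indicator B x *\<^sub>R h x) \<partial>M)"
    unfolding cmeas_def set_lebesgue_integral_def by (rule integral_norm_bound)
  also have "(\<lambda>x. norm (indicator B x *\<^sub>R h x)) = (indicator B :: _ \<Rightarrow> real)"
    by (rule ext) (simp add: h indicator_def)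
  also have "integral\<^sup>L M (indicator B) = measure M B" by (simp add: sp)
  finally show ?thesis .
qed

lemma tvar_cmeas_le:
  assumes h: "\<And>x. cmod (h x) = 1" and sM: "sets M = sets borel" and A: "A \<in> sets borel"
  shows "tvar (cmeas M h) A \<le> emeasure M A"
proof (rule tvar_leI)
  fix P assume P: "finite P" "disjoint P" "\<forall>B\<in>P. B \<in> sets borel \<and> B \<subseteq> A"
  have "(\<Sum>B\<in>P. ennreal (cmod (cmeas M h B))) \<le> (\<Sum>B\<in>P. emeasure M B)"
  proof (rule sum_mono)
    fix B assume "B \<in> P"
    have "ennreal (cmod (cmeas M h B)) \<le> ennreal (measure M B)"
      by (rule ennreal_leI, rule cmeas_norm_le[OF h sM])
    also have "\<dots> \<le> emeasure M B" by (rule ennreal_measure_le_emeasure)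
    finally show "ennreal (cmod (cmeas M h B)) \<le> emeasure M B" .
  qed
  also have "\<dots> = emeasure M (\<Union>B\<in>P. B)"
  proof (rule sum_emeasure)
    show "(\<lambda>B. B) ` P \<subseteq> sets M" using P(3) sM by auto
    show "disjoint_family_on (\<lambda>B. B) P"
      using P(2) unfolding disjoint_family_on_def disjoint_def pairwise_def disjnt_def by blast
    show "finite P" by fact
  qed
  also have "\<dots> \<le> emeasure M A"
    by (rule emeasure_mono) (use P(3) A sM in auto)
  finally show "(\<Sum>B\<in>P. ennreal (cmod (cmeas M h B))) \<le> emeasure M A" .
qed


lemma indicator_translate:
  fixes A :: "'a::ab_group_add set"
  shows "indicator A (x + y) = indicator ((+) (-y) ` A) x"
proof -
  have "x + y \<in> A \<longleftrightarrow> x \<in> (+) (-y) ` A"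
  proof
    assume "x + y \<in> A" then show "x \<in> (+) (-y) ` A"
      by (rule rev_image_eqI) (simp add: algebra_simps)
  next
    assume "x \<in> (+) (-y) ` A" then show "x + y \<in> A" by auto
  qed
  then show ?thesis by (simp add: indicator_def)
qed

lemma radon_facts:
  assumes "radon_measure M"
  shows "sets M = sets borel" "space M = UNIV"
    "\<And>K. compact K \<Longrightarrow> emeasure M K < \<infinity>"
    "\<And>B. B \<in> sets borel \<Longrightarrow> emeasure M B = (INF U\<in>{U. open U \<and> B \<subseteq> U}. emeasure M U)"
  using assms unfolding radon_measure_def
  by (auto dest: sets_eq_imp_space_eq)

lemma integrable_ind_bounded:
  fixes f :: "'a::topological_space \<Rightarrow> 'b::{banach, second_countable_topology, real_normed_algebra_1}"
  assumes sM: "sets M = sets borel" and S: "S \<in> sets borel" "emeasure M S < \<infinity>"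
    and f: "f \<in> borel_measurable borel" "\<And>x. norm (f x) \<le> 1"
  shows "integrable M (\<lambda>x. indicator S x * f x)"
proof (rule Bochner_Integration.integrable_bound[where f="indicator S :: _ \<Rightarrow> real"])
  show "integrable M (indicator S :: _ \<Rightarrow> real)"
    using S sM by (simp add: integrable_indicator_iff sets_eq_imp_space_eq[OF sM])
  show "(\<lambda>x. indicator S x * f x) \<in> borel_measurable M"
    using S f(1) by (simp add: measurable_cong_sets[OF sM refl])
  show "AE x in M. norm (indicator S x * f x) \<le> norm (indicator S x :: real)"
    by (intro AE_I2) (auto simp: indicator_def f(2))
qed


lemma usc_translate_meas:
  fixes M :: "'a::{topological_ab_group_add,t2_space} measure" and f :: "'a \<Rightarrow> real"
  assumes R: "radon_measure M" and f: "f \<in> borel_measurable borel" "\<And>x. 0 \<le> f x" "\<And>x. f x \<le> 1"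
    and A: "compact A"
  shows "(\<lambda>y. \<integral>x. indicator A (x + y) * f x \<partial>M) \<in> borel_measurable borel"
proof -
  note sM = radon_facts(1)[OF R] and sp = radon_facts(2)[OF R]
    and fin = radon_facts(3)[OF R] and outer = radon_facts(4)[OF R]
  have nf: "\<And>x. norm (f x) \<le> 1" using f(2,3) by simp
  define \<Phi> where "\<Phi> y = (\<integral>x. indicator ((+) (-y) ` A) x * f x \<partial>M)" for y
  have eq: "(\<lambda>y. \<integral>x. indicator A (x + y) * f x \<partial>M) = \<Phi>"
    unfolding \<Phi>_def by (simp add: indicator_translate)
  have int: "integrable M (\<lambda>x. indicator S x * f x)" if "S \<in> sets borel" "emeasure M S < \<infinity>" for S
    by (rule integrable_ind_bounded[OF sM that f(1) nf])
  have opn: "open {y. \<Phi> y < a}" for a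
  proof (rule Topological_Spaces.openI)
    fix y0 assume "y0 \<in> {y. \<Phi> y < a}"
    then have y0: "\<Phi> y0 < a" by simp
    define A0 where "A0 = (+) (-y0) ` A"
    have A0c: "compact A0" unfolding A0_def by (rule compact_translate[OF A])
    then have A0b: "A0 \<in> sets borel" by (rule borel_compact)
    have A0f: "emeasure M A0 < \<infinity>" by (rule fin[OF A0c])
    define e where "e = (a - \<Phi> y0) / 2"
    have e: "e > 0" using y0 unfolding e_def by simp
    have "emeasure M A0 < emeasure M A0 + ennreal e"
    proof -
      have "emeasure M A0 = ennreal (measure M A0)"
        using A0f emeasure_eq_ennreal_measure[of M A0] by simp
      moreover have "ennreal (measure M A0) < ennreal (measure M A0) + ennreal e"
      proof -
        have "ennreal (measure M A0) < ennreal (measure M A0 + e)"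
          using e by (intro ennreal_lessI add_nonneg_pos measure_nonneg) auto
        then show ?thesis using e by (simp add: ennreal_plus)
      qed
      ultimately show ?thesis by simp
    qed
    then have "(INF U\<in>{U. open U \<and> A0 \<subseteq> U}. emeasure M U) < emeasure M A0 + ennreal e"
      using outer[OF A0b] by simp
    then obtain U where U: "open U" "A0 \<subseteq> U" "emeasure M U < emeasure M A0 + ennreal e"
      by (auto simp: INF_less_iff)
    have Ub: "U \<in> sets borel" using U(1) by simp
    have "emeasure M A0 + ennreal e < \<infinity>" using A0f by (simp add: less_top ennreal_add_eq_top)
    then have Uf: "emeasure M U < \<infinity>" using U(3) by (rule order.strict_trans[rotated])
    have mU: "measure M U < measure M A0 + e"
    proof -
      have "ennreal (measure M U) < ennreal (measure M A0) + ennreal e"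
        using U(3) A0f Uf emeasure_eq_ennreal_measure[of M A0] emeasure_eq_ennreal_measure[of M U]
        by simp
      also have "\<dots> = ennreal (measure M A0 + e)" using e by (simp add: ennreal_plus)
      finally show ?thesis by (simp add: ennreal_less_iff)
    qed
    have mD: "measure M (U - A0) < e"
      using mU measure_Diff[of M U A0] Uf A0b Ub U(2) sM by simp
    define W where "W = (\<lambda>p. snd p + fst p) -` U"
    have Wo: "open W" unfolding W_def
      by (rule continuous_open_vimage[OF U(1)]) (intro continuous_intros)
    have "{0} \<times> A0 \<subseteq> W" using U(2) unfolding W_def by auto
    from Elementary_Topology.tube_lemma[OF A0c Wo this] obtain X0 where X0: "0 \<in> X0" "open X0" "X0 \<times> A0 \<subseteq> W"
      by blast
    define T where "T = (\<lambda>y. y0 - y) -` X0"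
    have To: "open T" unfolding T_def
      by (rule continuous_open_vimage[OF X0(2)]) (intro continuous_intros)
    have y0T: "y0 \<in> T" using X0(1) unfolding T_def by simp
    have "T \<subseteq> {y. \<Phi> y < a}"
    proof
      fix y assume yT: "y \<in> T"
      have sub: "(+) (-y) ` A \<subseteq> U"
      proof
        fix z assume "z \<in> (+) (-y) ` A"
        then obtain a' where a': "a' \<in> A" "z = -y + a'" by auto
        have "-y0 + a' \<in> A0" unfolding A0_def using a'(1) by auto
        moreover have "y0 - y \<in> X0" using yT unfolding T_def by simp
        ultimately have "(y0 - y, -y0 + a') \<in> W" using X0(3) by auto
        then have "(-y0 + a') + (y0 - y) \<in> U" unfolding W_def by simp
        moreover have "(-y0 + a') + (y0 - y) = z" using a'(2) by (simp add: algebra_simps)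
        ultimately show "z \<in> U" by simp
      qed
      have Ayc: "compact ((+) (-y) ` A)" by (rule compact_translate[OF A])
      have "\<Phi> y \<le> (\<integral>x. indicator U x * f x \<partial>M)"
        unfolding \<Phi>_def
      proof (rule integral_mono)
        show "integrable M (\<lambda>x. indicator ((+) (-y) ` A) x * f x)"
          using Ayc by (intro int borel_compact fin)
        show "integrable M (\<lambda>x. indicator U x * f x)" by (rule int[OF Ub Uf])
        show "indicator ((+) (- y) ` A) x * f x \<le> indicator U x * f x" for x
          using sub f(2)[of x] by (auto simp: indicator_def)
      qed
      also have "(\<integral>x. indicator U x * f x \<partial>M) =
          (\<integral>x. indicator A0 x * f x + indicator (U - A0) x * f x \<partial>M)"
        by (rule Bochner_Integration.integral_cong[OF refl]) (use U(2) in \<open>auto simp: indicator_def\<close>)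
      also have "\<dots> = \<Phi> y0 + (\<integral>x. indicator (U - A0) x * f x \<partial>M)"
      proof -
        have "emeasure M (U - A0) < \<infinity>"
          using Uf emeasure_mono[of "U - A0" U M] Ub sM by (simp add: le_less_trans)
        then have "integrable M (\<lambda>x. indicator (U - A0) x * f x)"
          using Ub A0b by (intro int) auto
        then show ?thesis unfolding \<Phi>_def A0_def[symmetric]
          using int[OF A0b A0f] by (simp add: integral_add)
      qed
      also have "(\<integral>x. indicator (U - A0) x * f x \<partial>M) \<le> (\<integral>x. indicator (U - A0) x \<partial>M)"
      proof (rule integral_mono)
        have "emeasure M (U - A0) < \<infinity>"
          using Uf emeasure_mono[of "U - A0" U M] Ub sM by (simp add: le_less_trans)
        then show "integrable M (\<lambda>x. indicator (U - A0) x * f x)"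
          using Ub A0b by (intro int) auto
        show "integrable M (indicator (U - A0) :: _ \<Rightarrow> real)"
          using \<open>emeasure M (U - A0) < \<infinity>\<close> Ub A0b sM
          by (simp add: integrable_indicator_iff sp)
        show "indicator (U - A0) x * f x \<le> indicator (U - A0) x" for x
          using f(3)[of x] by (auto simp: indicator_def)
      qed
      also have "(\<integral>x. indicator (U - A0) x \<partial>M) = measure M (U - A0)" by (simp add: sp)
      finally have "\<Phi> y \<le> \<Phi> y0 + measure M (U - A0)" by simp
      then show "y \<in> {y. \<Phi> y < a}" using mD e y0 unfolding e_def by simp
    qed
    then show "\<exists>T. open T \<and> y0 \<in> T \<and> T \<subseteq> {y. \<Phi> y < a}" using To y0T by blast
  qed
  have "\<Phi> \<in> borel_measurable borel"
    unfolding borel_measurable_iff_less using opn by simp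
  then show ?thesis unfolding eq .
qed


lemma integrable_translate_ind:
  fixes M :: "'a::{topological_ab_group_add,t2_space} measure"
    and f :: "'a \<Rightarrow> 'b::{banach, second_countable_topology, real_normed_algebra_1}"
  assumes R: "radon_measure M" and f: "f \<in> borel_measurable borel" "\<And>x. norm (f x) \<le> 1"
    and A: "A \<in> sets borel" and L: "compact L" "A \<subseteq> L"
  shows "integrable M (\<lambda>x. indicator A (x + y) * f x)"
proof -
  note sM = radon_facts(1)[OF R] and fin = radon_facts(3)[OF R]
  have Lb: "(+) (-y) ` L \<in> sets M" unfolding sM by (rule borel_translate[OF borel_compact[OF L(1)]])
  have "emeasure M ((+) (-y) ` A) \<le> emeasure M ((+) (-y) ` L)"
    by (rule emeasure_mono[OF image_mono[OF L(2)] Lb])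
  also have "\<dots> < \<infinity>" by (intro fin compact_translate L)
  finally have "integrable M (\<lambda>x. indicator ((+) (-y) ` A) x * f x)"
    by (intro integrable_ind_bounded[OF sM _ _ f] borel_translate A)
  then show ?thesis by (simp add: indicator_translate)
qed

lemma signed_translate_meas:
  fixes M :: "'a::{topological_ab_group_add,t2_space} measure" and g :: "'a \<Rightarrow> real"
  assumes R: "radon_measure M" and g: "g \<in> borel_measurable borel" "\<And>x. \<bar>g x\<bar> \<le> 1"
    and A: "compact A"
  shows "(\<lambda>y. \<integral>x. indicator A (x + y) * g x \<partial>M) \<in> borel_measurable borel"
proof -
  define f where "f x = (g x + 1) / 2" for x
  have fm: "f \<in> borel_measurable borel" unfolding f_def using g(1) by measurable
  have f01: "0 \<le> f x" "f x \<le> 1" for x using g(2)[of x] unfolding f_def by auto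
  have i1: "integrable M (\<lambda>x. indicator A (x + y) * f x)" for y
    using f01 by (intro integrable_translate_ind[OF R fm _ borel_compact[OF A] A]) auto
  have i0: "integrable M (\<lambda>x. indicator A (x + y) * (\<lambda>_. 1::real) x)" for y
    by (intro integrable_translate_ind[OF R _ _ borel_compact[OF A] A]) auto
  have eq: "(\<integral>x. indicator A (x + y) * g x \<partial>M) =
      2 * (\<integral>x. indicator A (x + y) * f x \<partial>M) - (\<integral>x. indicator A (x + y) * (\<lambda>_. 1::real) x \<partial>M)" for y
  proof -
    have "(\<integral>x. indicator A (x + y) * g x \<partial>M) =
        (\<integral>x. 2 * (indicator A (x + y) * f x) - indicator A (x + y) * (\<lambda>_. 1::real) x \<partial>M)"
      by (rule Bochner_Integration.integral_cong[OF refl]) (simp add: f_def algebra_simps)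
    also have "\<dots> = 2 * (\<integral>x. indicator A (x + y) * f x \<partial>M) - (\<integral>x. indicator A (x + y) * (\<lambda>_. 1::real) x \<partial>M)"
      using i1[of y] i0[of y] by (simp add: integral_diff)
    finally show ?thesis .
  qed
  have m1: "(\<lambda>y. \<integral>x. indicator A (x + y) * f x \<partial>M) \<in> borel_measurable borel"
    by (rule usc_translate_meas[OF R fm f01 A])
  have m0: "(\<lambda>y. \<integral>x. indicator A (x + y) * (\<lambda>_. 1::real) x \<partial>M) \<in> borel_measurable borel"
    by (rule usc_translate_meas[OF R _ _ _ A]) auto
  show ?thesis unfolding eq using m1 m0 by measurable
qed

lemma complex_translate_meas_compact:
  fixes M :: "'a::{topological_ab_group_add,t2_space} measure" and h :: "'a \<Rightarrow> complex"
  assumes R: "radon_measure M" and h: "h \<in> borel_measurable borel" "\<And>x. cmod (h x) = 1"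
    and A: "compact A"
  shows "(\<lambda>y. \<integral>x. indicator A (x + y) * h x \<partial>M) \<in> borel_measurable borel"
proof -
  have int: "integrable M (\<lambda>x. indicator A (x + y) * h x)" for y
    using h(2) by (intro integrable_translate_ind[OF R h(1) _ borel_compact[OF A] A]) auto
  have re: "Re (\<integral>x. indicator A (x + y) * h x \<partial>M) = (\<integral>x. indicator A (x + y) * Re (h x) \<partial>M)" for y
  proof -
    have "Re (\<integral>x. indicator A (x + y) * h x \<partial>M) = (\<integral>x. Re (indicator A (x + y) * h x) \<partial>M)"
      using integral_Re[OF int[of y]] by simp
    also have "\<dots> = (\<integral>x. indicator A (x + y) * Re (h x) \<partial>M)"
      by (rule Bochner_Integration.integral_cong[OF refl]) (simp add: indicator_def)
    finally show ?thesis .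
  qed
  have im: "Im (\<integral>x. indicator A (x + y) * h x \<partial>M) = (\<integral>x. indicator A (x + y) * Im (h x) \<partial>M)" for y
  proof -
    have "Im (\<integral>x. indicator A (x + y) * h x \<partial>M) = (\<integral>x. Im (indicator A (x + y) * h x) \<partial>M)"
      using integral_Im[OF int[of y]] by simp
    also have "\<dots> = (\<integral>x. indicator A (x + y) * Im (h x) \<partial>M)"
      by (rule Bochner_Integration.integral_cong[OF refl]) (simp add: indicator_def)
    finally show ?thesis .
  qed
  have bre: "\<bar>Re (h x)\<bar> \<le> 1" for x using abs_Re_le_cmod[of "h x"] h(2)[of x] by simp
  have bim: "\<bar>Im (h x)\<bar> \<le> 1" for x using abs_Im_le_cmod[of "h x"] h(2)[of x] by simp
  show ?thesis unfolding borel_measurable_complex_iff re im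
    using signed_translate_meas[OF R measurable_compose[OF h(1) borel_measurable_Re] bre A]
      signed_translate_meas[OF R measurable_compose[OF h(1) borel_measurable_Im] bim A]
    by simp
qed


lemma meas_ind_translate:
  fixes h :: "'a::topological_ab_group_add \<Rightarrow> complex"
  assumes sM: "sets M = sets borel" and h: "h \<in> borel_measurable borel" and B: "B \<in> sets borel"
  shows "(\<lambda>x. indicator B (x + y) * h x) \<in> borel_measurable M"
proof -
  have "(+) (-y) ` B \<in> sets borel" by (rule borel_translate[OF B])
  then have "(\<lambda>x. indicator ((+) (-y) ` B) x * h x) \<in> borel_measurable borel"
    by (intro borel_measurable_times[OF borel_measurable_indicator h])
  then have "(\<lambda>x. indicator B (x + y) * h x) \<in> borel_measurable borel"
    by (simp only: indicator_translate)
  then show ?thesis by (simp only: measurable_cong_sets[OF sM refl])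
qed

lemma sigma_sets_compacts:
  fixes L :: "'a::{topological_space,t2_space} set"
  assumes L: "compact L" and A: "A \<in> sets borel" "A \<subseteq> L"
  shows "A \<in> sigma_sets L {C. compact C \<and> C \<subseteq> L}"
proof -
  have "L \<in> sigma_sets UNIV {S. open S}" using borel_compact[OF L] sets_borel by blast
  from sigma_sets_Int[OF this subset_UNIV]
  have eq: "(\<inter>) L ` sigma_sets UNIV {S. open S} = sigma_sets L ((\<inter>) L ` {S. open S})" .
  have "A = L \<inter> A" using A(2) by blast
  moreover have "A \<in> sigma_sets UNIV {S. open S}" using A(1) sets_borel by blast
  ultimately have "A \<in> sigma_sets L ((\<inter>) L ` {S. open S})" using eq by blast
  moreover have "sigma_sets L ((\<inter>) L ` {S. open S}) \<subseteq> sigma_sets L {C. compact C \<and> C \<subseteq> L}"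
  proof (rule sigma_sets_mono, rule subsetI)
    fix X assume "X \<in> (\<inter>) L ` {S. open S}"
    then obtain U where U: "open U" "X = L \<inter> U" by auto
    have "L - U \<in> sigma_sets L {C. compact C \<and> C \<subseteq> L}"
      using compact_diff[OF L U(1)] by (intro sigma_sets.Basic) auto
    then have "L - (L - U) \<in> sigma_sets L {C. compact C \<and> C \<subseteq> L}"
      by (rule sigma_sets.Compl)
    moreover have "L - (L - U) = X" using U(2) by blast
    ultimately show "X \<in> sigma_sets L {C. compact C \<and> C \<subseteq> L}" by simp
  qed
  ultimately show ?thesis by blast
qed

lemma sigma_sets_compacts_borel:
  fixes L :: "'a::{topological_space,t2_space} set"
  assumes L: "compact L" and A: "A \<in> sigma_sets L {C. compact C \<and> C \<subseteq> L}"
  shows "A \<in> sets borel \<and> A \<subseteq> L"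
  using A
proof (induction rule: sigma_sets.induct)
  case (Basic a) then show ?case by (auto intro: borel_compact)
next
  case Empty then show ?case by simp
next
  case (Compl a) then show ?case using borel_compact[OF L] by auto
next
  case (Union a) then show ?case by auto
qed

lemma complex_translate_meas:
  fixes M :: "'a::{topological_ab_group_add,t2_space} measure" and h :: "'a \<Rightarrow> complex"
  assumes R: "radon_measure M" and h: "h \<in> borel_measurable borel" "\<And>x. cmod (h x) = 1"
    and L: "compact L" and A: "A \<in> sets borel" "A \<subseteq> L"
  shows "(\<lambda>y. \<integral>x. indicator A (x + y) * h x \<partial>M) \<in> borel_measurable borel"
proof -
  note sM = radon_facts(1)[OF R]
  have nh: "\<And>x. norm (h x) \<le> 1" using h(2) by simp
  have int: "integrable M (\<lambda>x. indicator B (x + y) * h x)" if "B \<in> sets borel" "B \<subseteq> L" for B y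
    by (rule integrable_translate_ind[OF R h(1) nh that(1) L that(2)])
  have Ls: "L \<in> sets borel" by (rule borel_compact[OF L])
  have ist: "Int_stable {C. compact C \<and> C \<subseteq> L}"
    unfolding Int_stable_def by (auto intro!: compact_Int)
  have pw: "{C. compact C \<and> C \<subseteq> L} \<subseteq> Pow L" by auto
  from ist pw sigma_sets_compacts[OF L A] show ?thesis
  proof (induction rule: sigma_sets_induct_disjoint)
    case (basic A)
    then show ?case using complex_translate_meas_compact[OF R h] by auto
  next
    case empty
    then show ?case by simp
  next
    case (compl A)
    note AA = sigma_sets_compacts_borel[OF L compl(1)]
    have eq: "(\<integral>x. indicator (L - A) (x + y) * h x \<partial>M) =
        (\<integral>x. indicator L (x + y) * h x \<partial>M) - (\<integral>x. indicator A (x + y) * h x \<partial>M)" for y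
    proof -
      have "(\<integral>x. indicator (L - A) (x + y) * h x \<partial>M) =
          (\<integral>x. indicator L (x + y) * h x - indicator A (x + y) * h x \<partial>M)"
        by (rule Bochner_Integration.integral_cong[OF refl]) (use AA in \<open>auto simp: indicator_def\<close>)
      also have "\<dots> = (\<integral>x. indicator L (x + y) * h x \<partial>M) - (\<integral>x. indicator A (x + y) * h x \<partial>M)"
        by (rule Bochner_Integration.integral_diff) (use int[OF Ls order.refl] int AA in auto)
      finally show ?thesis .
    qed
    show ?case unfolding eq
      by (rule borel_measurable_diff[OF complex_translate_meas_compact[OF R h L] compl(2)])
  next
    case (union A)
    have AA': "A i \<in> sets borel \<and> A i \<subseteq> L" for i
      by (rule sigma_sets_compacts_borel[OF L]) (use union(2) in blast)
    have AA: "A i \<in> sets borel" "A i \<subseteq> L" for i using AA'[of i] by simp_all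
    have UA: "(\<Union>i. A i) \<in> sets borel"
      by (rule sets.countable_UN) (use AA in blast)
    have UAn: "(\<Union>i<n. A i) \<in> sets borel" for n
      by (rule sets.countable_UN) (use AA in blast)
    show ?case
    proof (rule borel_measurable_LIMSEQ_metric)
      show "(\<lambda>y. \<Sum>i<n. \<integral>x. indicator (A i) (x + y) * h x \<partial>M) \<in> borel_measurable borel" for n
        by (rule borel_measurable_sum) (rule union(3))
      fix y
      have si: "(\<Sum>i<n. \<integral>x. indicator (A i) (x + y) * h x \<partial>M) =
          (\<integral>x. indicator (\<Union>i<n. A i) (x + y) * h x \<partial>M)" for n
      proof -
        have "(\<Sum>i<n. \<integral>x. indicator (A i) (x + y) * h x \<partial>M) =
           (\<integral>x. (\<Sum>i<n. indicator (A i) (x + y) * h x) \<partial>M)"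
          by (rule Bochner_Integration.integral_sum[symmetric]) (rule int[OF AA])
        also have "\<dots> = (\<integral>x. indicator (\<Union>i<n. A i) (x + y) * h x \<partial>M)"
        proof (rule Bochner_Integration.integral_cong[OF refl])
          fix x
          have "indicator (\<Union>i<n. A i) (x + y) = (\<Sum>i<n. indicator (A i) (x + y) :: complex)"
            using indicator_UN_disjoint[of "{..<n}" A "x + y"] union(1)
            by (simp add: disjoint_family_on_def)
          then show "(\<Sum>i<n. indicator (A i) (x + y) * h x) = indicator (\<Union>i<n. A i) (x + y) * h x"
            by (simp add: sum_distrib_right)
        qed
        finally show ?thesis .
      qed
      have "(\<lambda>n. \<integral>x. indicator (\<Union>i<n. A i) (x + y) * h x \<partial>M) \<longlonglongrightarrow>
          (\<integral>x. indicator (\<Union>i. A i) (x + y) * h x \<partial>M)"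
      proof (rule integral_dominated_convergence[where w="\<lambda>x. indicator L (x + y) * (\<lambda>_. 1::real) x"])
        show "(\<lambda>x. indicator (\<Union>i. A i) (x + y) * h x) \<in> borel_measurable M"
          by (rule meas_ind_translate[OF sM h(1) UA])
        show "(\<lambda>x. indicator (\<Union>i<n. A i) (x + y) * h x) \<in> borel_measurable M" for n
          by (rule meas_ind_translate[OF sM h(1) UAn])
        show "integrable M (\<lambda>x. indicator L (x + y) * (\<lambda>_. 1::real) x)"
          by (rule integrable_translate_ind[OF R _ _ Ls L order.refl]) auto
        show "AE x in M. (\<lambda>n. indicator (\<Union>i<n. A i) (x + y) * h x) \<longlonglongrightarrow> indicator (\<Union>i. A i) (x + y) * h x"
          by (intro AE_I2 tendsto_mult_right LIMSEQ_indicator_UN)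
        show "AE x in M. norm (indicator (\<Union>i<n. A i) (x + y) * h x) \<le> indicator L (x + y) * (\<lambda>_. 1::real) x" for n
          using AA(2) by (intro AE_I2) (auto simp: indicator_def norm_mult h(2))
      qed
      then show "(\<lambda>n. \<Sum>i<n. \<integral>x. indicator (A i) (x + y) * h x \<partial>M) \<longlonglongrightarrow>
          (\<integral>x. indicator (\<Union>i. A i) (x + y) * h x \<partial>M)"
        unfolding si .
    qed
  qed
qed


lemma Knorm_upper: "tvar \<mu> ((+) s ` K) \<le> Knorm K \<mu>"
  unfolding Knorm_def by (rule SUP_upper) simp

lemma Knorm_finite:
  fixes K :: "'a::{topological_ab_group_add,t2_space} set"
  assumes K: "compact K" and nap: "norm_almost_periodic K \<mu>"
    and fin: "\<And>A. compact A \<Longrightarrow> tvar \<mu> A < \<infinity>"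
  shows "Knorm K \<mu> < \<infinity>"
proof -
  from nap have "relatively_dense {t. Knorm K (\<lambda>A. translate t \<mu> A - \<mu> A) < ennreal 1}"
    unfolding norm_almost_periodic_def by (rule allE[where x=1]) simp
  then obtain C where C: "compact C"
    and cov: "{p + c | p c. p \<in> {t. Knorm K (\<lambda>A. translate t \<mu> A - \<mu> A) < ennreal 1} \<and> c \<in> C} = UNIV"
    unfolding relatively_dense_def by blast
  define CK where "CK = (\<lambda>z. fst z + snd z) ` (C \<times> K)"
  have CKc: "compact CK" unfolding CK_def
    by (intro compact_continuous_image compact_Times C K continuous_intros)
  have "tvar \<mu> ((+) s ` K) \<le> 1 + tvar \<mu> CK" for s
  proof -
    have "s \<in> UNIV" by simp
    then obtain p c where pc: "s = p + c" "Knorm K (\<lambda>A. translate p \<mu> A - \<mu> A) < ennreal 1" "c \<in> C"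
      using cov by blast
    have "tvar \<mu> ((+) s ` K) \<le> tvar (\<lambda>A. translate p \<mu> A - \<mu> A) ((+) s ` K)
        + tvar (\<lambda>B. \<mu> ((+) (-p) ` B)) ((+) s ` K)"
    proof (rule tvar_sub)
      fix B
      have "\<mu> B = \<mu> ((+) (-p) ` B) - (translate p \<mu> B - \<mu> B)" by (simp add: translate_def)
      then show "cmod (\<mu> B) \<le> cmod (translate p \<mu> B - \<mu> B) + cmod (\<mu> ((+) (- p) ` B))"
        by (metis add.commute norm_triangle_ineq4)
    qed
    also have "\<dots> \<le> 1 + tvar \<mu> CK"
    proof (rule add_mono)
      show "tvar (\<lambda>A. translate p \<mu> A - \<mu> A) ((+) s ` K) \<le> 1"
        using Knorm_upper[of "\<lambda>A. translate p \<mu> A - \<mu> A" s K] pc(2) by simp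
      have "tvar (\<lambda>B. \<mu> ((+) (-p) ` B)) ((+) s ` K) \<le> tvar \<mu> ((+) (-p) ` ((+) s ` K))"
        by (rule tvar_translate_le)
      also have "(+) (-p) ` ((+) s ` K) = (+) c ` K"
        unfolding translate_translate pc(1) by simp
      also have "tvar \<mu> ((+) c ` K) \<le> tvar \<mu> CK"
      proof (rule tvar_mono, rule subsetI)
        fix z assume "z \<in> (+) c ` K"
        then obtain k where k: "k \<in> K" "z = c + k" by auto
        then have "z = (\<lambda>z. fst z + snd z) (c, k)" by simp
        moreover have "(c, k) \<in> C \<times> K" using k pc(3) by simp
        ultimately show "z \<in> CK" unfolding CK_def by (rule image_eqI)
      qed
      finally show "tvar (\<lambda>B. \<mu> ((+) (-p) ` B)) ((+) s ` K) \<le> tvar \<mu> CK" .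
    qed
    finally show ?thesis .
  qed
  then have "Knorm K \<mu> \<le> 1 + tvar \<mu> CK" unfolding Knorm_def by (intro SUP_least) auto
  also have "\<dots> < \<infinity>" using fin[OF CKc] by (simp add: less_top ennreal_add_eq_top)
  finally show ?thesis .
qed

lemma Fm_cmeas:
  fixes A :: "'a::ab_group_add set" and h :: "'a \<Rightarrow> complex"
  shows "(\<integral>x. indicator A (x + y) * h x \<partial>M) = cmeas M h ((+) (-y) ` A)"
  unfolding cmeas_def set_lebesgue_integral_def
  by (rule Bochner_Integration.integral_cong[OF refl]) (simp only: indicator_translate, simp add: indicator_def)


theorem proposition6p2:
  fixes M N :: "'a::{topological_ab_group_add, t2_space} measure"
    and h g :: "'a \<Rightarrow> complex"
    and K :: "'a set"
  assumes "locally_compact_space (euclidean :: 'a topology)"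
    and "compact K" and "interior K \<noteq> {}"
    and "complex_radon M h"
    and "finite_complex_radon N g"
    and "norm_almost_periodic K (cmeas M h)"
  shows "norm_almost_periodic K (conv_meas M h N g)"
proof -
  note K = assms(2)
  define \<mu> where "\<mu> = cmeas M h"
  have R: "radon_measure M" and hM: "h \<in> borel_measurable M" and h1: "\<And>x. cmod (h x) = 1"
    using assms(4) unfolding complex_radon_def by auto
  note sM = radon_facts(1)[OF R] and finM = radon_facts(3)[OF R]
  have hB: "h \<in> borel_measurable borel" using hM by (simp add: measurable_cong_sets[OF sM refl])
  have RN: "radon_measure N" and gN: "g \<in> borel_measurable N" and g1: "\<And>x. cmod (g x) = 1"
    and Nfin: "emeasure N (space N) < \<infinity>"
    using assms(5) unfolding finite_complex_radon_def complex_radon_def by auto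
  note sN = radon_facts(1)[OF RN] and spN = radon_facts(2)[OF RN]
  interpret N: finite_measure N using Nfin by (intro finite_measureI) simp
  have nap: "norm_almost_periodic K \<mu>" using assms(6) unfolding \<mu>_def .
  have tvfin: "tvar \<mu> A < \<infinity>" if "compact A" for A
  proof -
    have "tvar \<mu> A \<le> emeasure M A"
      unfolding \<mu>_def by (rule tvar_cmeas_le[OF h1 sM borel_compact[OF that]])
    also have "\<dots> < \<infinity>" by (rule finM[OF that])
    finally show ?thesis .
  qed
  have "Knorm K \<mu> < \<infinity>" by (rule Knorm_finite[OF K nap tvfin])
  then obtain Q where Q: "0 \<le> Q" "Knorm K \<mu> = ennreal Q"
    by (cases "Knorm K \<mu>") auto
  define Fm where "Fm A y = (\<integral>x. indicator A (x + y) * h x \<partial>M)" for A y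
  have Fm_eq: "Fm A y = \<mu> ((+) (-y) ` A)" for A y
    unfolding Fm_def \<mu>_def by (rule Fm_cmeas)
  have conv_eq: "conv_meas M h N g A = (\<integral>y. Fm A y * g y \<partial>N)" for A
    unfolding conv_meas_def Fm_def ..
  have Fm_bound: "cmod (Fm B y) \<le> Q" if "B \<in> sets borel" "B \<subseteq> (+) s ` K" for B y s
  proof -
    have "ennreal (cmod (Fm B y)) \<le> tvar \<mu> ((+) (-y) ` ((+) s ` K))"
      unfolding Fm_eq using that by (intro tvar_single borel_translate image_mono) 
    also have "\<dots> \<le> Knorm K \<mu>" unfolding translate_translate by (rule Knorm_upper)
    finally show ?thesis using Q by simp
  qed
  have Fm_meas: "(\<lambda>y. Fm B y) \<in> borel_measurable N" if "B \<in> sets borel" "B \<subseteq> (+) s ` K" for B s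
    unfolding Fm_def measurable_cong_sets[OF sN refl]
    by (rule complex_translate_meas[OF R hB h1 compact_translate[OF K] that])
  have gB: "g \<in> borel_measurable N" by (rule gN)
  define Nn where "Nn = measure N (space N)"
  have Nn0: "0 \<le> Nn" unfolding Nn_def by simp
  show ?thesis
    unfolding norm_almost_periodic_def
  proof (intro allI impI)
    fix \<epsilon> :: real assume \<epsilon>: "\<epsilon> > 0"
    define \<epsilon>' where "\<epsilon>' = \<epsilon> / (Nn + 1)"
    have \<epsilon>': "\<epsilon>' > 0" unfolding \<epsilon>'_def using \<epsilon> Nn0 by simp
    from nap \<epsilon>' have "relatively_dense {t. Knorm K (\<lambda>A. translate t \<mu> A - \<mu> A) < ennreal \<epsilon>'}"
      unfolding norm_almost_periodic_def by blast
    then obtain C where C: "compact C"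
      and cov: "{p + c | p c. p \<in> {t. Knorm K (\<lambda>A. translate t \<mu> A - \<mu> A) < ennreal \<epsilon>'} \<and> c \<in> C} = UNIV"
      unfolding relatively_dense_def by blast
    have main: "Knorm K (\<lambda>A. translate t (conv_meas M h N g) A - conv_meas M h N g A) < ennreal \<epsilon>"
      if t: "Knorm K (\<lambda>A. translate t \<mu> A - \<mu> A) < ennreal \<epsilon>'" for t
    proof -
      define D where "D = (\<lambda>A. translate t \<mu> A - \<mu> A)"
      obtain r where r: "0 \<le> r" "Knorm K D = ennreal r"
        using t unfolding D_def[symmetric] by (cases "Knorm K D") auto
      have r\<epsilon>: "r < \<epsilon>'" using t r unfolding D_def[symmetric] by (simp add: ennreal_less_iff)
      have rN: "r * Nn < \<epsilon>"
      proof -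
        have "r * Nn \<le> r * (Nn + 1)" using r(1) by (simp add: mult_left_mono)
        also have "r * (Nn + 1) < \<epsilon>' * (Nn + 1)" using r\<epsilon> Nn0 by (intro mult_strict_right_mono) auto
        also have "\<epsilon>' * (Nn + 1) = \<epsilon>" unfolding \<epsilon>'_def using Nn0 by simp
        finally show ?thesis .
      qed
      have "Knorm K (\<lambda>A. translate t (conv_meas M h N g) A - conv_meas M h N g A) \<le> ennreal (r * Nn)"
        unfolding Knorm_def
      proof (rule SUP_least, rule tvar_leI)
        fix s and P :: "'a set set"
        assume P: "finite P" "disjoint P" "\<forall>B\<in>P. B \<in> sets borel \<and> B \<subseteq> (+) s ` K"
        show "(\<Sum>B\<in>P. ennreal (cmod (translate t (conv_meas M h N g) B - conv_meas M h N g B))) \<le> ennreal (r * Nn)"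
        proof -
          define \<phi> where "\<phi> B y = cmod (D ((+) (-y) ` B))" for B y
          have PB: "B \<in> sets borel" "B \<subseteq> (+) s ` K" if "B \<in> P" for B using P(3) that by auto
          have PB': "(+) (-t) ` B \<in> sets borel" "(+) (-t) ` B \<subseteq> (+) (-t + s) ` K" if "B \<in> P" for B
          proof -
            show "(+) (-t) ` B \<in> sets borel" by (rule borel_translate[OF PB(1)[OF that]])
            have "(+) (-t) ` B \<subseteq> (+) (-t) ` ((+) s ` K)" by (rule image_mono[OF PB(2)[OF that]])
            then show "(+) (-t) ` B \<subseteq> (+) (-t + s) ` K" by (simp only: translate_translate)
          qed
          have Dphi: "Fm ((+) (-t) ` B) y - Fm B y = D ((+) (-y) ` B)" for B y
          proof -
            have "(+) (-y) ` ((+) (-t) ` B) = (+) (-t) ` ((+) (-y) ` B)"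
              unfolding translate_translate by (simp add: add.commute)
            then show ?thesis unfolding Fm_eq D_def translate_def by simp
          qed
          have intFg: "integrable N (\<lambda>y. Fm A y * g y)" if "A \<in> sets borel" "A \<subseteq> (+) s' ` K" for A s'
          proof (rule N.integrable_const_bound[where B=Q])
            show "AE x in N. norm (Fm A x * g x) \<le> Q"
              using Fm_bound[OF that] by (intro AE_I2) (simp add: norm_mult g1)
            show "(\<lambda>x. Fm A x * g x) \<in> borel_measurable N"
              by (rule borel_measurable_times[OF Fm_meas[OF that] gB])
          qed
          have intphi: "integrable N (\<phi> B)" if "B \<in> P" for B
          proof (rule N.integrable_const_bound[where B="Q + Q"])
            show "AE x in N. norm (\<phi> B x) \<le> Q + Q"
            proof (intro AE_I2)
              fix y
              have "norm (\<phi> B y) = cmod (Fm ((+) (-t) ` B) y - Fm B y)" unfolding \<phi>_def Dphi by simp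
              also have "\<dots> \<le> cmod (Fm ((+) (-t) ` B) y) + cmod (Fm B y)" by (rule norm_triangle_ineq4)
              also have "\<dots> \<le> Q + Q"
                by (intro add_mono Fm_bound[OF PB'[OF that]] Fm_bound[OF PB[OF that]])
              finally show "norm (\<phi> B y) \<le> Q + Q" .
            qed
            have "(\<lambda>y. cmod (Fm ((+) (-t) ` B) y - Fm B y)) \<in> borel_measurable N"
              by (rule measurable_compose[OF borel_measurable_diff[OF Fm_meas[OF PB'[OF that]] Fm_meas[OF PB[OF that]]] borel_measurable_norm])
            then show "\<phi> B \<in> borel_measurable N" unfolding \<phi>_def Dphi .
          qed
          have cd: "cmod (translate t (conv_meas M h N g) B - conv_meas M h N g B) \<le> (\<integral>y. \<phi> B y \<partial>N)"
            if "B \<in> P" for B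
          proof -
            have "translate t (conv_meas M h N g) B - conv_meas M h N g B =
                (\<integral>y. Fm ((+) (-t) ` B) y * g y \<partial>N) - (\<integral>y. Fm B y * g y \<partial>N)"
              unfolding translate_def conv_eq ..
            also have "\<dots> = (\<integral>y. Fm ((+) (-t) ` B) y * g y - Fm B y * g y \<partial>N)"
              by (rule Bochner_Integration.integral_diff[symmetric, OF intFg[OF PB'[OF that]] intFg[OF PB[OF that]]])
            also have "cmod \<dots> \<le> (\<integral>y. norm (Fm ((+) (-t) ` B) y * g y - Fm B y * g y) \<partial>N)"
              by (rule integral_norm_bound)
            also have "\<dots> = (\<integral>y. \<phi> B y \<partial>N)"
            proof (rule Bochner_Integration.integral_cong[OF refl])
              fix y
              have "Fm ((+) (-t) ` B) y * g y - Fm B y * g y = (Fm ((+) (-t) ` B) y - Fm B y) * g y"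
                by (simp add: algebra_simps)
              then show "norm (Fm ((+) (-t) ` B) y * g y - Fm B y * g y) = \<phi> B y"
                unfolding \<phi>_def Dphi by (simp add: norm_mult g1)
            qed
            finally show ?thesis .
          qed
          have sumle: "(\<Sum>B\<in>P. \<phi> B y) \<le> r" for y
          proof -
            have "ennreal (\<Sum>B\<in>P. \<phi> B y) = (\<Sum>B\<in>P. ennreal (cmod (D ((+) (-y) ` B))))"
              unfolding \<phi>_def by (rule sum_ennreal[symmetric]) simp
            also have "\<dots> \<le> tvar (\<lambda>B. D ((+) (-y) ` B)) ((+) s ` K)"
              by (rule tvar_le[OF P])
            also have "\<dots> \<le> tvar D ((+) (-y) ` ((+) s ` K))"
              by (rule tvar_translate_le)
            also have "\<dots> \<le> Knorm K D"
              unfolding translate_translate by (rule Knorm_upper)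
            also have "\<dots> = ennreal r" by (rule r(2))
            finally show ?thesis using r(1) by simp
          qed
          have "(\<Sum>B\<in>P. ennreal (cmod (translate t (conv_meas M h N g) B - conv_meas M h N g B)))
              = ennreal (\<Sum>B\<in>P. cmod (translate t (conv_meas M h N g) B - conv_meas M h N g B))"
            by (rule sum_ennreal) simp
          also have "\<dots> \<le> ennreal (r * Nn)"
          proof (rule ennreal_leI)
            have "(\<Sum>B\<in>P. cmod (translate t (conv_meas M h N g) B - conv_meas M h N g B))
                \<le> (\<Sum>B\<in>P. \<integral>y. \<phi> B y \<partial>N)"
              by (rule sum_mono) (rule cd)
            also have "\<dots> = (\<integral>y. (\<Sum>B\<in>P. \<phi> B y) \<partial>N)"
              by (rule Bochner_Integration.integral_sum[symmetric]) (rule intphi)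
            also have "\<dots> \<le> (\<integral>y. r \<partial>N)"
            proof (rule integral_mono)
              show "integrable N (\<lambda>y. \<Sum>B\<in>P. \<phi> B y)"
                by (rule Bochner_Integration.integrable_sum) (rule intphi)
              show "integrable N (\<lambda>y. r)" by simp
              show "(\<Sum>B\<in>P. \<phi> B y) \<le> r" for y by (rule sumle)
            qed
            also have "\<dots> = r * Nn" unfolding Nn_def by simp
            finally show "(\<Sum>B\<in>P. cmod (translate t (conv_meas M h N g) B - conv_meas M h N g B)) \<le> r * Nn" .
          qed
          finally show ?thesis .
        qed
      qed
      also have "\<dots> < ennreal \<epsilon>" using rN \<epsilon> by (simp add: ennreal_lessI)
      finally show ?thesis .
    qed
    show "relatively_dense {t. Knorm K (\<lambda>A. translate t (conv_meas M h N g) A - conv_meas M h N g A) < ennreal \<epsilon>}"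
      unfolding relatively_dense_def
    proof (intro exI conjI)
      show "compact C" by fact
      show "{p + c |p c. p \<in> {t. Knorm K (\<lambda>A. translate t (conv_meas M h N g) A - conv_meas M h N g A) < ennreal \<epsilon>} \<and> c \<in> C} = UNIV"
        using cov main by blast
    qed
  qed
qed

end
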